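(* Let $f_c\ge1$ be an integer, $\mathbb{T}=\mathbb{R}/\mathbb{Z}$, $0<h<\frac{1}{2f_c}$ and $m_0=\delta_{h/2}-\delta_{-h/2}$. Then the problem $$\sup_{p\in\mathbb{R}^{2f_c+1}}\int_{\mathbb{T}}\Big(\sum_{k=0}^{2f_c}p_k\varphi_k(t)\Big)\mathrm{d}m_0(t)\quad\text{s.t.}\quad \sup_{t\in\mathbb{T}}\Big|\sum_{k=0}^{2f_c}p_k\varphi_k(t)\Big|\le1$$ has the unique solution $p_*=(0,\dots,0,1)$, i.e. the unique maximizing trigonometric polynomial is $\eta_*(t)=\sin(2\pi f_c t)$. Equivalently, among real trigonometric polynomials $\eta$ of degree at most $f_c$ with $\|\eta\|_\infty\le1$, $\eta(h/2)-\eta(-h/2)$ is maximized uniquely by $\eta_*$.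
   Context: The trigonometric system is $\varphi_0(t)=1$, $\varphi_{2j-1}(t)=\cos(2\pi jt)$, $\varphi_{2j}(t)=\sin(2\pi jt)$ for $1\le j\le f_c$. *)

theory Defs
  imports Complex_Main
begin

definition trig_phi :: "nat \<Rightarrow> real \<Rightarrow> real" where
  "trig_phi k t = (if k = 0 then 1
     else if odd k then cos (2 * pi * real ((k + 1) div 2) * t)
     else sin (2 * pi * real (k div 2) * t))"

definition trig_poly :: "nat \<Rightarrow> (nat \<Rightarrow> real) \<Rightarrow> real \<Rightarrow> real" where
  "trig_poly fc p t = (\<Sum>k\<le>2 * fc. p k * trig_phi k t)"

end

theory Submission imports Defs "HOL-Computational_Algebra.Polynomial" begin

definition TP :: "nat \<Rightarrow> (nat \<Rightarrow> real) \<Rightarrow> (nat \<Rightarrow> real) \<Rightarrow> real \<Rightarrow> real" where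
  "TP N a b \<theta> = (\<Sum>j\<le>N. a j * cos (real j * \<theta>) + b j * sin (real j * \<theta>))"

lemma cis_inj_pi:
  assumes "-pi < x" "x \<le> pi" "-pi < y" "y \<le> pi" "cis x = cis y"
  shows "x = y"
proof -
  have c: "cos x = cos y" and s: "sin x = sin y" using assms(5) by (auto simp: complex_eq_iff)
  consider "0 \<le> x" "0 \<le> y" | "x < 0" "y < 0" | "0 \<le> x" "y < 0" | "x < 0" "0 \<le> y" by linarith
  then show ?thesis
  proof cases
    case 1 then show ?thesis using cos_inj_pi[of x y] c assms by auto
  next
    case 2 then show ?thesis using cos_inj_pi[of "-x" "-y"] c assms by auto
  next
    case 3
    have "sin y < 0" using sin_gt_zero[of "-y"] 3 assms by auto
    moreover have "sin x \<ge> 0" using sin_ge_zero[of x] 3 assms by auto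
    ultimately show ?thesis using s by linarith
  next
    case 4
    have "sin x < 0" using sin_gt_zero[of "-x"] 4 assms by auto
    moreover have "sin y \<ge> 0" using sin_ge_zero[of y] 4 assms by auto
    ultimately show ?thesis using s by linarith
  qed
qed

lemma term_id:
  fixes a b :: real and \<theta> :: real
  assumes "j \<le> N"
  shows "(complex_of_real a - \<i> * complex_of_real b) / 2 * cis \<theta> ^ (N + j)
       + (complex_of_real a + \<i> * complex_of_real b) / 2 * cis \<theta> ^ (N - j)
       = cis \<theta> ^ N * complex_of_real (a * cos (real j * \<theta>) + b * sin (real j * \<theta>))"
proof -
  define w where "w = cis \<theta> ^ (N - j)"
  define u where "u = cis (real j * \<theta>)"
  define v where "v = cis (- (real j * \<theta>))"
  have uv: "u * v = 1" unfolding u_def v_def by (simp add: cis_mult)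
  have cu: "cis \<theta> ^ j = u" unfolding u_def by (simp add: DeMoivre)
  have p1: "cis \<theta> ^ (N + j) = w * u * u"
  proof -
    have "N + j = (N - j) + j + j" using assms by simp
    then have "cis \<theta> ^ (N + j) = cis \<theta> ^ (N - j) * cis \<theta> ^ j * cis \<theta> ^ j"
      by (metis power_add)
    then show ?thesis using cu w_def by simp
  qed
  have p2: "cis \<theta> ^ N = w * u"
  proof -
    have "N = (N - j) + j" using assms by simp
    then have "cis \<theta> ^ N = cis \<theta> ^ (N - j) * cis \<theta> ^ j" by (metis power_add)
    then show ?thesis using cu w_def by simp
  qed
  have br: "(complex_of_real a - \<i> * complex_of_real b) / 2 * u
       + (complex_of_real a + \<i> * complex_of_real b) / 2 * v
       = complex_of_real (a * cos (real j * \<theta>) + b * sin (real j * \<theta>))"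
    unfolding u_def v_def by (simp add: complex_eq_iff cis.sel algebra_simps add_divide_distrib[symmetric])
  have "(complex_of_real a - \<i> * complex_of_real b) / 2 * cis \<theta> ^ (N + j)
       + (complex_of_real a + \<i> * complex_of_real b) / 2 * cis \<theta> ^ (N - j)
     = w * u * ((complex_of_real a - \<i> * complex_of_real b) / 2 * u
       + (complex_of_real a + \<i> * complex_of_real b) / 2 * v)"
  proof -
    have "w * u * ((complex_of_real a - \<i> * complex_of_real b) / 2 * u
       + (complex_of_real a + \<i> * complex_of_real b) / 2 * v)
      = (complex_of_real a - \<i> * complex_of_real b) / 2 * (w * u * u)
       + (complex_of_real a + \<i> * complex_of_real b) / 2 * (w * (u * v))"
      by (simp add: algebra_simps)
    then show ?thesis using p1 uv w_def by simp
  qed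
  also have "\<dots> = cis \<theta> ^ N * complex_of_real (a * cos (real j * \<theta>) + b * sin (real j * \<theta>))"
    using br p2 by simp
  finally show ?thesis .
qed

lemma TP_zero:
  assumes fin: "finite Z" and sub: "Z \<subseteq> {-pi<..pi}" and card: "card Z > 2 * N"
    and zer: "\<And>\<theta>. \<theta> \<in> Z \<Longrightarrow> TP N a b \<theta> = 0"
  shows "\<forall>j\<le>N. a j = 0" and "\<forall>j. 1 \<le> j \<longrightarrow> j \<le> N \<longrightarrow> b j = 0"
proof -
  define A where "A j = (complex_of_real (a j) - \<i> * complex_of_real (b j)) / 2" for j
  define B where "B j = (complex_of_real (a j) + \<i> * complex_of_real (b j)) / 2" for j
  define Q where "Q = (\<Sum>j\<le>N. monom (A j) (N + j) + monom (B j) (N - j))"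
  have polyQ: "poly Q (cis \<theta>) = cis \<theta> ^ N * complex_of_real (TP N a b \<theta>)" for \<theta>
  proof -
    have "poly Q (cis \<theta>) = (\<Sum>j\<le>N. A j * cis \<theta> ^ (N + j) + B j * cis \<theta> ^ (N - j))"
      unfolding Q_def by (simp add: poly_sum poly_monom)
    also have "\<dots> = (\<Sum>j\<le>N. cis \<theta> ^ N * complex_of_real (a j * cos (real j * \<theta>) + b j * sin (real j * \<theta>)))"
      by (rule sum.cong) (use term_id in \<open>auto simp: A_def B_def simp del: of_real_add of_real_mult\<close>)
    also have "\<dots> = cis \<theta> ^ N * complex_of_real (TP N a b \<theta>)"
      unfolding TP_def by (simp add: sum_distrib_left)
    finally show ?thesis .
  qed
  have degQ: "degree Q \<le> 2 * N"
    unfolding Q_def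
    by (rule degree_sum_le) (auto intro!: degree_add_le order.trans[OF degree_monom_le])
  have Q0: "Q = 0"
  proof (rule ccontr)
    assume nz: "Q \<noteq> 0"
    have "cis ` Z \<subseteq> {x. poly Q x = 0}" using zer polyQ by auto
    moreover have "finite {x. poly Q x = 0}" using poly_roots_finite[OF nz] .
    ultimately have "card (cis ` Z) \<le> card {x. poly Q x = 0}" by (rule card_mono[rotated])
    moreover have "inj_on cis Z"
      by (rule inj_onI) (use sub cis_inj_pi in \<open>auto simp: subset_iff\<close>)
    then have "card (cis ` Z) = card Z" by (rule card_image)
    ultimately show False using card_poly_roots_bound[OF nz] degQ card by linarith
  qed
  have coeffQ: "coeff Q m = (\<Sum>j\<le>N. (if N + j = m then A j else 0) + (if N - j = m then B j else 0))" for m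
    unfolding Q_def by (simp add: coeff_sum coeff_monom)
  have hA: "A j = 0" if "1 \<le> j" "j \<le> N" for j
  proof -
    have "coeff Q (N + j) = (\<Sum>i\<le>N. (if i = j then A i else 0))"
      unfolding coeffQ using that by (intro sum.cong) auto
    also have "\<dots> = A j" using that by simp
    finally show ?thesis using Q0 by simp
  qed
  have hB: "B j = 0" if "1 \<le> j" "j \<le> N" for j
  proof -
    have "coeff Q (N - j) = (\<Sum>i\<le>N. (if i = j then B i else 0))"
      unfolding coeffQ using that by (intro sum.cong) auto
    also have "\<dots> = B j" using that by simp
    finally show ?thesis using Q0 by simp
  qed
  have h0: "a 0 = 0"
  proof -
    have "coeff Q N = (\<Sum>i\<le>N. (if i = 0 then A i + B i else 0))"
      unfolding coeffQ by (intro sum.cong) auto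
    also have "\<dots> = A 0 + B 0" by simp
    also have "\<dots> = complex_of_real (a 0)" by (simp add: A_def B_def field_simps)
    finally show ?thesis using Q0 by simp
  qed
  have ab: "a j = 0 \<and> b j = 0" if "1 \<le> j" "j \<le> N" for j
  proof -
    have "A j + B j = 0" "B j - A j = 0" using hA hB that by auto
    then show ?thesis by (simp_all add: A_def B_def complex_eq_iff field_simps)
  qed
  show "\<forall>j\<le>N. a j = 0"
    using h0 ab by (metis le_less_linear less_one)
  show "\<forall>j. 1 \<le> j \<longrightarrow> j \<le> N \<longrightarrow> b j = 0" using ab by auto
qed

definition SP :: "nat \<Rightarrow> (nat \<Rightarrow> real) \<Rightarrow> real \<Rightarrow> real" where
  "SP N b \<theta> = (\<Sum>j\<le>N. b j * sin (real j * \<theta>))"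

definition isS :: "nat \<Rightarrow> (real \<Rightarrow> real) \<Rightarrow> bool" where
  "isS N f \<longleftrightarrow> (\<exists>b. \<forall>\<theta>. f \<theta> = SP N b \<theta>)"

lemma SP_TP: "SP N b \<theta> = TP N (\<lambda>_. 0) b \<theta>"
  unfolding SP_def TP_def by simp

lemma isS_sin: "m \<le> N \<Longrightarrow> isS N (\<lambda>\<theta>. sin (real m * \<theta>))"
  unfolding isS_def SP_def
proof (intro exI allI)
  fix \<theta> assume "m \<le> N"
  have "(\<Sum>j\<le>N. (if j = m then 1 else 0) * sin (real j * \<theta>)) = (\<Sum>j\<le>N. if j = m then sin (real j * \<theta>) else 0)"
    by (rule sum.cong) auto
  also have "\<dots> = sin (real m * \<theta>)" using \<open>m \<le> N\<close> by simp
  finally show "sin (real m * \<theta>) = (\<Sum>j\<le>N. (if j = m then 1 else 0) * sin (real j * \<theta>))" by simp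
qed

lemma isS_zero: "isS N (\<lambda>\<theta>. 0)"
  unfolding isS_def SP_def by (rule exI[of _ "\<lambda>j. 0"]) simp

lemma isS_add: "isS N f \<Longrightarrow> isS N g \<Longrightarrow> isS N (\<lambda>\<theta>. f \<theta> + g \<theta>)"
  unfolding isS_def SP_def
proof (elim exE)
  fix b c assume "\<forall>\<theta>. f \<theta> = (\<Sum>j\<le>N. b j * sin (real j * \<theta>))" "\<forall>\<theta>. g \<theta> = (\<Sum>j\<le>N. c j * sin (real j * \<theta>))"
  then show "\<exists>d. \<forall>\<theta>. f \<theta> + g \<theta> = (\<Sum>j\<le>N. d j * sin (real j * \<theta>))"
    by (intro exI[of _ "\<lambda>j. b j + c j"]) (simp add: sum.distrib distrib_right)
qed

lemma isS_scale: "isS N f \<Longrightarrow> isS N (\<lambda>\<theta>. c * f \<theta>)"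
  unfolding isS_def SP_def
proof (elim exE)
  fix b assume "\<forall>\<theta>. f \<theta> = (\<Sum>j\<le>N. b j * sin (real j * \<theta>))"
  then show "\<exists>d. \<forall>\<theta>. c * f \<theta> = (\<Sum>j\<le>N. d j * sin (real j * \<theta>))"
    by (intro exI[of _ "\<lambda>j. c * b j"]) (simp add: sum_distrib_left mult.assoc)
qed

lemma isS_sum: "finite I \<Longrightarrow> (\<And>i. i \<in> I \<Longrightarrow> isS N (f i)) \<Longrightarrow> isS N (\<lambda>\<theta>. \<Sum>i\<in>I. f i \<theta>)"
  by (induction I rule: finite_induct) (auto intro: isS_add isS_zero)

lemma isS_cong: "isS N f \<Longrightarrow> (\<And>\<theta>. f \<theta> = g \<theta>) \<Longrightarrow> isS N g"
  unfolding isS_def by auto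

lemma isS_expand: "isS N f \<Longrightarrow> f = (\<lambda>\<theta>. \<Sum>j\<le>N. b j * sin (real j * \<theta>)) \<Longrightarrow> True" by simp

lemma isS_mono_aux: "isS N f \<Longrightarrow> isS (Suc N) f"
  unfolding isS_def SP_def
proof (elim exE)
  fix b assume "\<forall>\<theta>. f \<theta> = (\<Sum>j\<le>N. b j * sin (real j * \<theta>))"
  then show "\<exists>d. \<forall>\<theta>. f \<theta> = (\<Sum>j\<le>Suc N. d j * sin (real j * \<theta>))"
    by (intro exI[of _ "\<lambda>j. if j \<le> N then b j else 0"]) simp
qed

lemma isS_cos_mult:
  assumes "isS N f" shows "isS (Suc N) (\<lambda>\<theta>. cos \<theta> * f \<theta>)"
proof -
  obtain b where b: "\<And>\<theta>. f \<theta> = (\<Sum>j\<le>N. b j * sin (real j * \<theta>))"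
    using assms unfolding isS_def SP_def by blast
  have eq: "cos \<theta> * f \<theta> = (\<Sum>j\<le>N. b j / 2 * sin (real (Suc j) * \<theta>) + (b j / 2) * sin ((real j - 1) * \<theta>))" for \<theta>
  proof -
    have t: "cos \<theta> * sin (real j * \<theta>) = sin (real (Suc j) * \<theta>) / 2 + sin ((real j - 1) * \<theta>) / 2" for j
    proof -
      have "sin (real (Suc j) * \<theta>) = sin (real j * \<theta> + \<theta>)" by (simp add: algebra_simps)
      moreover have "sin ((real j - 1) * \<theta>) = sin (real j * \<theta> - \<theta>)" by (simp add: algebra_simps)
      ultimately show ?thesis by (simp add: sin_add sin_diff field_simps)
    qed
    have t2: "cos \<theta> * (b j * sin (real j * \<theta>)) = b j / 2 * sin (real (Suc j) * \<theta>) + (b j / 2) * sin ((real j - 1) * \<theta>)" for j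
    proof -
      have "cos \<theta> * (b j * sin (real j * \<theta>)) = b j * (cos \<theta> * sin (real j * \<theta>))" by simp
      also have "\<dots> = b j * (sin (real (Suc j) * \<theta>) / 2 + sin ((real j - 1) * \<theta>) / 2)" by (simp only: t)
      finally show ?thesis by (simp add: distrib_left)
    qed
    show ?thesis unfolding b sum_distrib_left
      by (rule sum.cong) (simp_all only: t2)
  qed
  have sm: "isS (Suc N) (\<lambda>\<theta>. sin ((real j - 1) * \<theta>))" if "j \<le> N" for j
  proof (cases j)
    case 0
    show ?thesis using isS_scale[OF isS_sin[of 1 "Suc N"], of "-1"] 0 by simp
  next
    case (Suc k)
    then have "(real j - 1) = real k" by simp
    then show ?thesis using isS_sin[of k "Suc N"] Suc that by simp
  qed
  show ?thesis
    by (rule isS_cong[OF _ eq[symmetric]], rule isS_sum, simp)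
       (intro isS_add isS_scale isS_sin sm, auto)
qed

lemma isS_prod:
  assumes "finite J" shows "isS (Suc (card J)) (\<lambda>\<theta>. sin \<theta> * (\<Prod>j\<in>J. cos \<theta> - c j))"
  using assms
proof (induction J rule: finite_induct)
  case empty
  show ?case using isS_sin[of 1 1] by simp
next
  case (insert x J)
  have "isS (Suc (Suc (card J))) (\<lambda>\<theta>. cos \<theta> * (sin \<theta> * (\<Prod>j\<in>J. cos \<theta> - c j)) + (- c x) * (sin \<theta> * (\<Prod>j\<in>J. cos \<theta> - c j)))"
  proof (rule isS_add)
    show "isS (Suc (Suc (card J))) (\<lambda>\<theta>. cos \<theta> * (sin \<theta> * (\<Prod>j\<in>J. cos \<theta> - c j)))"
      by (rule isS_cos_mult[OF insert.IH])
    show "isS (Suc (Suc (card J))) (\<lambda>\<theta>. (- c x) * (sin \<theta> * (\<Prod>j\<in>J. cos \<theta> - c j)))"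
      by (rule isS_scale) (rule isS_mono_aux[OF insert.IH])
  qed
  then show ?case using insert by (rule_tac isS_cong) (auto simp: algebra_simps)
qed

lemma isS_odd: "isS N f \<Longrightarrow> f (- \<theta>) = - f \<theta>"
  unfolding isS_def SP_def by (auto simp: sum_negf)

lemma isS_at0: "isS N f \<Longrightarrow> f 0 = 0"
  using isS_odd[of N f 0] by simp

lemma isS_zero_count:
  assumes "isS N f" "finite Z" "Z \<subseteq> {-pi<..pi}" "card Z > 2 * N" "\<And>\<theta>. \<theta> \<in> Z \<Longrightarrow> f \<theta> = 0"
  shows "f \<theta> = 0"
proof -
  obtain b where b: "\<And>\<theta>. f \<theta> = SP N b \<theta>" using assms(1) unfolding isS_def by blast
  have "\<forall>j. 1 \<le> j \<longrightarrow> j \<le> N \<longrightarrow> b j = 0"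
    by (rule TP_zero(2)[OF assms(2-4)]) (use assms(5) b SP_TP in auto)
  then have h: "\<forall>j\<le>N. b j * sin (real j * \<theta>) = 0"
    by (metis less_one mult_eq_0_iff not_less of_nat_0 mult_zero_left sin_zero)
  show ?thesis unfolding b SP_def by (rule sum.neutral) (use h in auto)
qed

definition nd :: "nat \<Rightarrow> nat \<Rightarrow> real" where
  "nd n k = (2 * real k + 1) * pi / (2 * real n)"

lemma nd_pos: "n \<ge> 1 \<Longrightarrow> 0 < nd n k"
  unfolding nd_def by (simp add: pi_gt_zero)

lemma nd_lt_pi: "n \<ge> 1 \<Longrightarrow> k < n \<Longrightarrow> nd n k < pi"
proof -
  assume a: "n \<ge> 1" "k < n"
  then have "2 * real k + 1 < 2 * real n" by simp
  then have "(2 * real k + 1) * pi < 2 * real n * pi" using pi_gt_zero by simp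
  then show ?thesis unfolding nd_def using a by (simp add: divide_less_eq)
qed

lemma nd_mono: "n \<ge> 1 \<Longrightarrow> j < k \<Longrightarrow> nd n j < nd n k"
  unfolding nd_def by (intro divide_strict_right_mono mult_strict_right_mono) (auto simp: pi_gt_zero)

lemma nd_ge: "n \<ge> 1 \<Longrightarrow> pi / (2 * real n) \<le> nd n k"
  unfolding nd_def by (intro divide_right_mono) (auto simp: pi_gt_zero)

lemma nd_mult: "n \<ge> 1 \<Longrightarrow> real n * nd n k = real k * pi + pi / 2"
  unfolding nd_def by (simp add: field_simps)

lemma sin_nd: "n \<ge> 1 \<Longrightarrow> sin (real n * nd n k) = (-1) ^ k"
  by (simp add: nd_mult sin_add)

lemma cos_nd: "n \<ge> 1 \<Longrightarrow> cos (real n * nd n k) = 0"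
  by (simp add: nd_mult cos_add)

lemma card_nodes:
  assumes "n \<ge> 1"
  defines "Z \<equiv> nd n ` {..<n} \<union> (\<lambda>k. - nd n k) ` {..<n}"
  shows "finite Z" "card Z = 2 * n" "Z \<subseteq> {-pi<..pi}" "0 \<notin> Z"
proof -
  have inj1: "inj_on (nd n) {..<n}"
    by (rule inj_onI) (metis assms(1) nd_mono linorder_neqE_nat less_irrefl)
  have inj2: "inj_on (\<lambda>k. - nd n k) {..<n}"
    by (rule inj_onI) (metis assms(1) nd_mono linorder_neqE_nat less_irrefl neg_equal_iff_equal)
  have disj: "nd n ` {..<n} \<inter> (\<lambda>k. - nd n k) ` {..<n} = {}"
    using nd_pos[OF assms(1)] by (auto) (metis neg_less_0_iff_less not_less_iff_gr_or_eq)
  show "finite Z" unfolding Z_def by simp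
  show "card Z = 2 * n" unfolding Z_def
    by (subst card_Un_disjoint) (use disj card_image[OF inj1] card_image[OF inj2] in auto)
  show "Z \<subseteq> {-pi<..pi}" unfolding Z_def
    using nd_lt_pi[OF assms(1)] nd_pos[OF assms(1)] pi_gt_zero by (auto simp: less_imp_le) (smt (verit))+
  show "0 \<notin> Z" unfolding Z_def using nd_pos[OF assms(1)] by (auto simp: less_irrefl) (metis less_irrefl)+
qed

definition PP :: "nat \<Rightarrow> nat \<Rightarrow> real \<Rightarrow> real" where
  "PP n k \<theta> = sin \<theta> * (\<Prod>j\<in>{..<n}-{k}. cos \<theta> - cos (nd n j))"

lemma isS_PP: "k < n \<Longrightarrow> isS n (PP n k)"
proof -
  assume k: "k < n"
  have "card ({..<n}-{k}) = n - 1" using k by simp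
  then have "Suc (card ({..<n}-{k})) = n" using k by simp
  then show ?thesis using isS_prod[of "{..<n}-{k}" "\<lambda>j. cos (nd n j)"] unfolding PP_def
    by (simp add: fun_eq_iff)
qed

lemma PP_other: "m < n \<Longrightarrow> m \<noteq> k \<Longrightarrow> PP n k (nd n m) = 0"
  unfolding PP_def by (subst prod_zero) auto

lemma cos_nd_mono: "n \<ge> 1 \<Longrightarrow> j < k \<Longrightarrow> k < n \<Longrightarrow> cos (nd n k) < cos (nd n j)"
  by (rule cos_monotone_0_pi) (use nd_pos[of n j] nd_mono[of n j k] nd_lt_pi[of n k] in auto)

lemma PP_sign: assumes "n \<ge> 1" "k < n" shows "(-1) ^ k * PP n k (nd n k) > 0"
proof -
  let ?c = "\<lambda>j. cos (nd n j)"
  have split: "{..<n}-{k} = {..<k} \<union> {k<..<n}" using assms by auto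
  have "(\<Prod>j\<in>{..<n}-{k}. ?c k - ?c j) = (\<Prod>j\<in>{..<k}. ?c k - ?c j) * (\<Prod>j\<in>{k<..<n}. ?c k - ?c j)"
    unfolding split by (rule prod.union_disjoint) auto
  moreover have "(\<Prod>j\<in>{..<k}. ?c k - ?c j) = (-1) ^ k * (\<Prod>j\<in>{..<k}. ?c j - ?c k)"
  proof -
    have "(\<Prod>j\<in>{..<k}. ?c k - ?c j) = (\<Prod>j\<in>{..<k}. (-1) * (?c j - ?c k))" by simp
    also have "\<dots> = (-1) ^ k * (\<Prod>j\<in>{..<k}. ?c j - ?c k)" by (simp only: prod.distrib prod_constant card_lessThan)
    finally show ?thesis .
  qed
  moreover have "(\<Prod>j\<in>{..<k}. ?c j - ?c k) > 0"
    by (rule prod_pos) (use cos_nd_mono[OF assms(1)] assms in auto)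
  moreover have "(\<Prod>j\<in>{k<..<n}. ?c k - ?c j) > 0"
    by (rule prod_pos) (use cos_nd_mono[OF assms(1)] assms in auto)
  moreover have "sin (nd n k) > 0" by (rule sin_gt_zero) (use nd_pos nd_lt_pi assms in auto)
  moreover have "(-1::real) ^ k * (-1) ^ k = 1" by (simp add: power_mult_distrib[symmetric])
  ultimately show ?thesis unfolding PP_def
    by (metis (no_types, lifting) mult.assoc mult.left_commute mult_pos_pos mult_1)
qed

lemma PP_alpha: assumes "n \<ge> 1" "k < n" "0 < \<alpha>" "\<alpha> < pi / (2 * real n)" shows "PP n k \<alpha> > 0"
proof -
  have api: "\<alpha> < pi" using assms nd_ge[of n 0] nd_lt_pi[of n 0] by linarith
  have "sin \<alpha> > 0" by (rule sin_gt_zero) (use assms api in auto)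
  moreover have "(\<Prod>j\<in>{..<n}-{k}. cos \<alpha> - cos (nd n j)) > 0"
  proof (rule prod_pos)
    fix j assume "j \<in> {..<n}-{k}"
    then have "j < n" by auto
    have "cos (nd n j) < cos \<alpha>"
      by (rule cos_monotone_0_pi) (use assms nd_ge[of n j] nd_lt_pi[OF assms(1) \<open>j < n\<close>] in auto)
    then show "cos \<alpha> - cos (nd n j) > 0" by simp
  qed
  ultimately show ?thesis unfolding PP_def by simp
qed

lemma interp:
  assumes n: "n \<ge> 1" and f: "isS n f"
  shows "f \<theta> = (\<Sum>k<n. f (nd n k) * (PP n k \<theta> / PP n k (nd n k)))"
proof -
  define g where "g \<theta> = f \<theta> + (-1) * (\<Sum>k<n. f (nd n k) * (PP n k \<theta> / PP n k (nd n k)))" for \<theta>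
  have PPnz: "PP n k (nd n k) \<noteq> 0" if "k < n" for k
    using PP_sign[OF n that] by auto
  have gS: "isS n g" unfolding g_def
  proof (intro isS_add f isS_scale, rule isS_sum)
    fix k assume "k \<in> {..<n}"
    have "isS n (\<lambda>\<theta>. (f (nd n k) / PP n k (nd n k)) * PP n k \<theta>)"
      by (rule isS_scale) (use isS_PP[of k n] \<open>k \<in> {..<n}\<close> in \<open>simp add: isS_def\<close>)
    then show "isS n (\<lambda>\<theta>. f (nd n k) * (PP n k \<theta> / PP n k (nd n k)))"
      by (rule isS_cong) simp
  qed simp
  have gnd: "g (nd n m) = 0" if "m < n" for m
  proof -
    have "(\<Sum>k<n. f (nd n k) * (PP n k (nd n m) / PP n k (nd n k))) = (\<Sum>k<n. if k = m then f (nd n m) else 0)"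
      by (rule sum.cong) (use PP_other that PPnz in auto)
    also have "\<dots> = f (nd n m)" using that by simp
    finally show ?thesis unfolding g_def by simp
  qed
  define Z where "Z = nd n ` {..<n} \<union> (\<lambda>k. - nd n k) ` {..<n}"
  have "g \<theta> = 0"
  proof (rule isS_zero_count[OF gS, of "insert 0 Z"])
    show "finite (insert 0 Z)" using card_nodes(1)[OF n] Z_def by simp
    show "insert 0 Z \<subseteq> {- pi<..pi}" using card_nodes(3)[OF n] Z_def pi_gt_zero by auto
    show "2 * n < card (insert 0 Z)" using card_nodes(1,2,4)[OF n] Z_def by simp
    fix x assume "x \<in> insert 0 Z"
    then show "g x = 0" unfolding Z_def
      using gnd isS_odd[OF gS] isS_at0[OF gS] by auto
  qed
  then show ?thesis unfolding g_def by simp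
qed

lemma odd_bound:
  assumes n: "n \<ge> 1" and a: "0 < \<alpha>" "\<alpha> < pi / (2 * real n)"
    and f: "isS n f" and bd: "\<And>\<theta>. \<bar>f \<theta>\<bar> \<le> 1"
  shows "f \<alpha> \<le> sin (real n * \<alpha>)"
    and "f \<alpha> = sin (real n * \<alpha>) \<Longrightarrow> f \<theta> = sin (real n * \<theta>)"
proof -
  define w where "w k = PP n k \<alpha> / PP n k (nd n k)" for k
  define \<sigma> where "\<sigma> k = ((-1)::real) ^ k" for k
  have ss: "\<sigma> k * \<sigma> k = 1" for k unfolding \<sigma>_def by (simp add: power_mult_distrib[symmetric])
  have wpos: "\<sigma> k * w k > 0" if "k < n" for k
  proof -
    have "\<sigma> k * PP n k (nd n k) > 0" using PP_sign[OF n that] \<sigma>_def by simp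
    moreover have "PP n k \<alpha> > 0" using PP_alpha[OF n that a] .
    moreover have "\<sigma> k * w k = PP n k \<alpha> / (\<sigma> k * PP n k (nd n k))"
    proof -
      have "\<sigma> k \<noteq> 0" unfolding \<sigma>_def by simp
      then have "PP n k \<alpha> / (\<sigma> k * PP n k (nd n k)) = (\<sigma> k * PP n k \<alpha>) / (\<sigma> k * (\<sigma> k * PP n k (nd n k)))"
        by simp
      also have "\<dots> = (\<sigma> k * PP n k \<alpha>) / PP n k (nd n k)" using ss[of k] by (simp add: mult.assoc[symmetric])
      finally show ?thesis unfolding w_def by simp
    qed
    ultimately show ?thesis by simp
  qed
  have sinsum: "sin (real n * \<alpha>) = (\<Sum>k<n. \<sigma> k * w k)"
    using interp[OF n isS_sin[of n n], of \<alpha>] sin_nd[OF n] unfolding w_def \<sigma>_def by simp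
  have fsum: "f \<alpha> = (\<Sum>k<n. f (nd n k) * w k)"
    using interp[OF n f, of \<alpha>] unfolding w_def by simp
  define D where "D k = (1 - \<sigma> k * f (nd n k)) * (\<sigma> k * w k)" for k
  have Deq: "D k = \<sigma> k * w k - f (nd n k) * w k" for k
  proof -
    have "D k = \<sigma> k * w k - (\<sigma> k * \<sigma> k) * f (nd n k) * w k" unfolding D_def by (simp add: algebra_simps)
    then show ?thesis using ss[of k] by simp
  qed
  have sab: "\<bar>\<sigma> k\<bar> = 1" for k unfolding \<sigma>_def by simp
  have Dnn: "D k \<ge> 0" if "k < n" for k
  proof -
    have "\<bar>\<sigma> k * f (nd n k)\<bar> \<le> 1" using bd[of "nd n k"] sab[of k] by (simp add: abs_mult)
    then have "1 - \<sigma> k * f (nd n k) \<ge> 0" by simp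
    then show ?thesis unfolding D_def using wpos[OF that] by simp
  qed
  have diff: "sin (real n * \<alpha>) - f \<alpha> = (\<Sum>k<n. D k)"
    unfolding sinsum fsum Deq by (simp add: sum_subtractf)
  show "f \<alpha> \<le> sin (real n * \<alpha>)" using diff sum_nonneg[of "{..<n}" D] Dnn by auto
  assume eq: "f \<alpha> = sin (real n * \<alpha>)"
  have D0: "D k = 0" if "k < n" for k
    using diff eq sum_nonneg_eq_0_iff[of "{..<n}" D] Dnn that by auto
  have fnd: "f (nd n k) = \<sigma> k" if "k < n" for k
  proof -
    have "1 - \<sigma> k * f (nd n k) = 0" using D0[OF that] wpos[OF that] unfolding D_def by (metis less_irrefl mult_eq_0_iff)
    then have "\<sigma> k * (\<sigma> k * f (nd n k)) = \<sigma> k" by simp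
    then show ?thesis using ss[of k] by (simp add: mult.assoc[symmetric])
  qed
  define g where "g \<theta> = f \<theta> + (-1) * sin (real n * \<theta>)" for \<theta>
  have gS: "isS n g" unfolding g_def by (intro isS_add f isS_scale isS_sin) simp
  define Z where "Z = nd n ` {..<n} \<union> (\<lambda>k. - nd n k) ` {..<n}"
  have "g \<theta> = 0"
  proof (rule isS_zero_count[OF gS, of "insert 0 Z"])
    show "finite (insert 0 Z)" using card_nodes(1)[OF n] Z_def by simp
    show "insert 0 Z \<subseteq> {- pi<..pi}" using card_nodes(3)[OF n] Z_def pi_gt_zero by auto
    show "2 * n < card (insert 0 Z)" using card_nodes(1,2,4)[OF n] Z_def by simp
    have gnd: "g (nd n k) = 0" if "k < n" for k
      unfolding g_def using fnd[OF that] sin_nd[OF n] \<sigma>_def by simp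
    fix x assume "x \<in> insert 0 Z"
    then show "g x = 0" unfolding Z_def
      using gnd isS_odd[OF gS] isS_at0[OF gS] by auto
  qed
  then show "f \<theta> = sin (real n * \<theta>)" unfolding g_def by simp
qed

definition Ac :: "(nat \<Rightarrow> real) \<Rightarrow> nat \<Rightarrow> real" where
  "Ac p j = (if j = 0 then p 0 else p (2 * j - 1))"
definition Bc :: "(nat \<Rightarrow> real) \<Rightarrow> nat \<Rightarrow> real" where
  "Bc p j = (if j = 0 then 0 else p (2 * j))"

lemma sum_split2: "(\<Sum>k\<le>2 * N. f k) = f 0 + (\<Sum>j<N. f (2 * j + 1) + f (2 * j + 2))"
  for f :: "nat \<Rightarrow> real"
proof (induction N)
  case 0 then show ?case by simp
next
  case (Suc N)
  have "2 * Suc N = Suc (Suc (2 * N))" by simp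
  then have "(\<Sum>k\<le>2 * Suc N. f k) = (\<Sum>k\<le>2 * N. f k) + f (2 * N + 1) + f (2 * N + 2)"
    by (simp add: atMost_Suc)
  then show ?case using Suc by simp
qed

lemma trig_poly_TP: "trig_poly N p t = TP N (Ac p) (Bc p) (2 * pi * t)"
proof -
  have "trig_poly N p t = p 0 + (\<Sum>j<N. p (2 * j + 1) * trig_phi (2 * j + 1) t + p (2 * j + 2) * trig_phi (2 * j + 2) t)"
    unfolding trig_poly_def by (subst sum_split2) (simp add: trig_phi_def)
  also have "\<dots> = Ac p 0 + (\<Sum>j<N. Ac p (Suc j) * cos (real (Suc j) * (2 * pi * t)) + Bc p (Suc j) * sin (real (Suc j) * (2 * pi * t)))"
  proof -
    have e1: "(2 * j + 1 + 1) div 2 = Suc j" for j :: nat by simp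
    have e2: "(2 * j + 2) div 2 = Suc j" for j :: nat by simp
    show ?thesis unfolding Ac_def Bc_def trig_phi_def
      by (intro arg_cong2[where f="(+)"] sum.cong refl) (simp_all add: e1 e2 algebra_simps)
  qed
  also have "\<dots> = TP N (Ac p) (Bc p) (2 * pi * t)"
    unfolding TP_def by (subst sum.atMost_shift) simp
  finally show ?thesis .
qed

lemma TP_odd_diff: "TP N a b \<theta> - TP N a b (- \<theta>) = 2 * SP N b \<theta>"
  unfolding TP_def SP_def by (simp add: sum_subtractf[symmetric] sum_distrib_left algebra_simps)

lemma TP_split: "TP N a b \<theta> = TP N a (\<lambda>_. 0) \<theta> + SP N b \<theta>"
  unfolding TP_def SP_def by (simp add: sum.distrib)

lemma TP_even: "TP N a (\<lambda>_. 0) (- \<theta>) = TP N a (\<lambda>_. 0) \<theta>"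
  unfolding TP_def by simp

lemma SP_delta: "n \<le> N \<Longrightarrow> SP N (\<lambda>j. if j = n then 1 else 0) \<theta> = sin (real n * \<theta>)"
proof -
  assume "n \<le> N"
  have "SP N (\<lambda>j. if j = n then 1 else 0) \<theta> = (\<Sum>j\<le>N. if j = n then sin (real j * \<theta>) else 0)"
    unfolding SP_def by (rule sum.cong) auto
  then show ?thesis using \<open>n \<le> N\<close> by simp
qed

lemma TP_last: "TP (Suc N) a (\<lambda>_. 0) \<theta> = TP N a (\<lambda>_. 0) \<theta> + a (Suc N) * cos (real (Suc N) * \<theta>)"
  unfolding TP_def by simp

theorem mainTheorem8:
  fixes fc :: nat and h :: real
    and feasible :: "(nat \<Rightarrow> real) \<Rightarrow> bool" and obj :: "(nat \<Rightarrow> real) \<Rightarrow> real"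
  assumes "fc \<ge> 1" and "0 < h" and "h < 1 / (2 * real fc)"
  defines "feasible \<equiv> \<lambda>p. (\<forall>k > 2 * fc. p k = 0) \<and> (\<forall>t::real. \<bar>trig_poly fc p t\<bar> \<le> 1)"
  defines "obj \<equiv> \<lambda>p. trig_poly fc p (h / 2) - trig_poly fc p (- h / 2)"
  shows "{p. feasible p \<and> (\<forall>q. feasible q \<longrightarrow> obj q \<le> obj p)} = {\<lambda>k. if k = 2 * fc then 1 else 0}"
proof -
  define n where "n = fc"
  have n: "n \<ge> 1" using assms(1) n_def by simp
  define \<alpha> where "\<alpha> = pi * h"
  have a0: "0 < \<alpha>" using assms(2) pi_gt_zero \<alpha>_def by simp
  have a1: "\<alpha> < pi / (2 * real n)"
  proof -
    have "pi * h < pi * (1 / (2 * real n))"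
      using mult_strict_left_mono[OF assms(3) pi_gt_zero] n_def by simp
    then show ?thesis unfolding \<alpha>_def by simp
  qed
  define ps :: "nat \<Rightarrow> real" where "ps = (\<lambda>k. if k = 2 * fc then 1 else 0)"
  have tp_bound: "\<bar>TP n (Ac p) (Bc p) \<theta>\<bar> \<le> 1" if "feasible p" for p \<theta>
  proof -
    have "\<bar>trig_poly fc p (\<theta> / (2 * pi))\<bar> \<le> 1" using that feasible_def by blast
    then show ?thesis unfolding trig_poly_TP n_def by simp
  qed
  have obj_eq: "obj p = 2 * SP n (Bc p) \<alpha>" for p
  proof -
    have "obj p = TP n (Ac p) (Bc p) \<alpha> - TP n (Ac p) (Bc p) (- \<alpha>)"
      unfolding obj_def trig_poly_TP n_def \<alpha>_def by (simp add: algebra_simps)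
    then show ?thesis using TP_odd_diff by simp
  qed
  have SP_bound: "\<bar>SP n (Bc p) \<theta>\<bar> \<le> 1" if "feasible p" for p \<theta>
  proof -
    have "2 * SP n (Bc p) \<theta> = TP n (Ac p) (Bc p) \<theta> - TP n (Ac p) (Bc p) (- \<theta>)" using TP_odd_diff by simp
    then show ?thesis using tp_bound[OF that, of \<theta>] tp_bound[OF that, of "-\<theta>"] by linarith
  qed
  have isSB: "isS n (SP n (Bc p))" for p unfolding isS_def by blast
  have obj_le: "obj q \<le> 2 * sin (real n * \<alpha>)" if "feasible q" for q
    using odd_bound(1)[OF n a0 a1 isSB SP_bound[OF that]] obj_eq by simp
  have Aps: "Ac ps j = 0" for j
  proof -
    have "j \<noteq> 0 \<Longrightarrow> 2 * j - 1 \<noteq> 2 * fc" by presburger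
    then show ?thesis unfolding Ac_def ps_def using assms(1) by auto
  qed
  have Bps: "Bc ps j = (if j = n then 1 else 0)" for j
    unfolding Bc_def ps_def using n n_def by auto
  have TPps: "TP n (Ac ps) (Bc ps) \<theta> = sin (real n * \<theta>)" for \<theta>
  proof -
    have "TP n (Ac ps) (Bc ps) \<theta> = SP n (Bc ps) \<theta>" unfolding TP_def SP_def Aps by simp
    then show ?thesis unfolding Bps using SP_delta[of n n] by simp
  qed
  have feas_ps: "feasible ps"
    unfolding feasible_def
  proof (intro conjI allI impI)
    fix k assume "2 * fc < k" then show "ps k = 0" unfolding ps_def by simp
  next
    fix t
    have "trig_poly fc ps t = sin (real n * (2 * pi * t))" using trig_poly_TP TPps n_def by simp
    then show "\<bar>trig_poly fc ps t\<bar> \<le> 1" using abs_sin_le_one by simp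
  qed
  have obj_ps: "obj ps = 2 * sin (real n * \<alpha>)"
    unfolding obj_eq Bps SP_delta[OF order.refl] ..
  show ?thesis
  proof (rule set_eqI, rule iffI)
    fix p :: "nat \<Rightarrow> real" assume "p \<in> {\<lambda>k. if k = 2 * fc then 1 else 0}"
    then have "p = ps" unfolding ps_def by simp
    then show "p \<in> {p. feasible p \<and> (\<forall>q. feasible q \<longrightarrow> obj q \<le> obj p)}"
      using feas_ps obj_ps obj_le by simp
  next
    fix p :: "nat \<Rightarrow> real" assume "p \<in> {p. feasible p \<and> (\<forall>q. feasible q \<longrightarrow> obj q \<le> obj p)}"
    then have fp: "feasible p" and opt: "obj ps \<le> obj p" using feas_ps by auto
    have eqa: "SP n (Bc p) \<alpha> = sin (real n * \<alpha>)"
      using opt obj_ps obj_eq[of p] obj_le[OF fp] by linarith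
    have SPeq: "SP n (Bc p) \<theta> = sin (real n * \<theta>)" for \<theta>
      using odd_bound(2)[OF n a0 a1 isSB SP_bound[OF fp] eqa] .
    define Z where "Z = nd n ` {..<n} \<union> (\<lambda>k. - nd n k) ` {..<n}"
    have Zf: "finite Z" "card Z = 2 * n" "Z \<subseteq> {-pi<..pi}" "0 \<notin> Z"
      using card_nodes[OF n] Z_def by auto
    have Bp: "Bc p j = (if j = n then 1 else 0)" if "1 \<le> j" "j \<le> n" for j
    proof -
      have "\<forall>j. 1 \<le> j \<longrightarrow> j \<le> n \<longrightarrow> Bc p j - (if j = n then 1 else 0) = 0"
      proof (rule TP_zero(2)[of "insert 0 Z" n "\<lambda>_. 0"])
        show "finite (insert 0 Z)" using Zf by simp
        show "insert 0 Z \<subseteq> {-pi<..pi}" using Zf pi_gt_zero by auto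
        show "2 * n < card (insert 0 Z)" using Zf by simp
        fix \<theta>
        have "TP n (\<lambda>_. 0) (\<lambda>j. Bc p j - (if j = n then 1 else 0)) \<theta> = SP n (Bc p) \<theta> - SP n (\<lambda>j. if j = n then 1 else 0) \<theta>"
          unfolding TP_def SP_def by (simp add: sum_subtractf left_diff_distrib)
        then show "TP n (\<lambda>_. 0) (\<lambda>j. Bc p j - (if j = n then 1 else 0)) \<theta> = 0"
          using SPeq SP_delta[of n n] by simp
      qed
      then show ?thesis using that by auto
    qed
    define E where "E \<theta> = TP n (Ac p) (\<lambda>_. 0) \<theta>" for \<theta>
    have Eeq: "TP n (Ac p) (Bc p) \<theta> = E \<theta> + sin (real n * \<theta>)" for \<theta>
      unfolding E_def using TP_split[of n "Ac p" "Bc p" \<theta>] SPeq[of \<theta>] by simp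
    have Enode: "E (nd n m) = 0" if "m < n" for m
    proof -
      define x where "x = nd n m"
      have s: "sin (real n * x) = (-1) ^ m" using sin_nd[OF n] x_def by simp
      have Ex: "E (-x) = E x" unfolding E_def using TP_even by simp
      have b1: "\<bar>E x + (-1) ^ m\<bar> \<le> 1" using tp_bound[OF fp, of x] Eeq s by simp
      have b2: "\<bar>E x - (-1) ^ m\<bar> \<le> 1" using tp_bound[OF fp, of "-x"] Eeq[of "-x"] s Ex by simp
      have "E x = 0"
      proof (cases "even m")
        case True then show ?thesis using b1 b2 by simp
      next
        case False then show ?thesis using b1 b2 by simp
      qed
      then show ?thesis using x_def by simp
    qed
    obtain n' where n': "n = Suc n'" using n by (cases n) auto
    have Esplit: "E \<theta> = TP n' (Ac p) (\<lambda>_. 0) \<theta> + Ac p n * cos (real n * \<theta>)" for \<theta>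
      unfolding E_def n' by (rule TP_last)
    have Alow: "\<forall>j\<le>n'. Ac p j = 0"
    proof (rule TP_zero(1)[of Z n' _ "\<lambda>_. 0"])
      show "finite Z" "Z \<subseteq> {-pi<..pi}" using Zf by auto
      show "2 * n' < card Z" using Zf n' by simp
      fix \<theta> assume "\<theta> \<in> Z"
      then obtain m where m: "m < n" "\<theta> = nd n m \<or> \<theta> = - nd n m" unfolding Z_def by auto
      have c: "cos (real n * \<theta>) = 0" using m cos_nd[OF n, of m] by auto
      have "E \<theta> = 0" using m Enode[OF m(1)] E_def TP_even by auto
      then show "TP n' (Ac p) (\<lambda>_. 0) \<theta> = 0" using Esplit[of \<theta>] c by simp
    qed
    have TPlow0: "TP n' (Ac p) (\<lambda>_. 0) \<theta> = 0" for \<theta>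
      unfolding TP_def using Alow by simp
    define c where "c = Ac p n"
    have form: "TP n (Ac p) (Bc p) \<theta> = c * cos (real n * \<theta>) + sin (real n * \<theta>)" for \<theta>
      using Eeq Esplit TPlow0 c_def by simp
    have c0: "c = 0"
    proof (rule ccontr)
      assume "c \<noteq> 0"
      define r where "r = sqrt (1 + c\<^sup>2)"
      have rpos: "r > 0" unfolding r_def by (simp add: add_pos_nonneg)
      have r2: "r\<^sup>2 = 1 + c\<^sup>2" unfolding r_def by simp
      have "(c / r)\<^sup>2 + (1 / r)\<^sup>2 = (c\<^sup>2 + 1) / r\<^sup>2" by (simp add: power_divide add_divide_distrib)
      also have "\<dots> = 1" using r2 rpos by (simp add: add_pos_nonneg) (smt (verit) zero_le_power2)
      finally have "(c / r)\<^sup>2 + (1 / r)\<^sup>2 = 1" .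
      then obtain \<phi> where phi: "c / r = cos \<phi>" "1 / r = sin \<phi>" by (rule sincos_total_2pi)
      have "TP n (Ac p) (Bc p) (\<phi> / real n) = c * cos \<phi> + sin \<phi>" using form n by simp
      also have "\<dots> = (c\<^sup>2 + 1) / r" using phi[symmetric] by (simp add: power2_eq_square add_divide_distrib)
      also have "\<dots> = r" using r2 rpos by (simp add: field_simps power2_eq_square)
      finally have "r \<le> 1" using tp_bound[OF fp, of "\<phi> / real n"] by simp
      moreover have "r > 1" unfolding r_def using \<open>c \<noteq> 0\<close> by (simp add: real_less_rsqrt)
      ultimately show False by simp
    qed
    have Ap: "Ac p j = 0" if "j \<le> n" for j
      using Alow c0 c_def that n' by (cases "j = n") auto
    show "p \<in> {\<lambda>k. if k = 2 * fc then 1 else 0}"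
    proof (simp, rule ext)
      fix k
      show "p k = (if k = 2 * fc then 1 else 0)"
      proof (cases "k > 2 * n")
        case True
        then show ?thesis using fp feasible_def n_def by auto
      next
        case False
        show ?thesis
        proof (cases "k = 0")
          case True then show ?thesis using Ap[of 0] unfolding Ac_def using n n_def by auto
        next
          case k0: False
          show ?thesis
          proof (cases "even k")
            case True
            then obtain j where j: "k = 2 * j" by auto
            then have "1 \<le> j" "j \<le> n" using k0 False by auto
            then show ?thesis using Bp[of j] j n_def unfolding Bc_def by auto
          next
            case odd: False
            then obtain j where j: "k = 2 * j + 1" using oddE by blast
            then have "Suc j \<le> n" using False by auto
            then have "p k = 0" using Ap[of "Suc j"] j unfolding Ac_def by simp
            then show ?thesis using odd n_def by auto
          qed
        qed
      qed
    qed
  qed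
qed

end
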